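(* Let $p\geq0$, $m\geq1$ and let $\mathcal Z_p$ be the orbifold hypersurface in $\mathbb P(2,2p+1,\dots,2p+1)$ (homogeneous coordinates $z_0,\dots,z_{2m+1}$) cut out by $z_0^{2p+1}+z_1^2+\cdots+z_{2m+1}^2=0$, viewed as the quotient of the corresponding link in $S^{4m+3}$ by the weighted circle action $z\mapsto(\zeta^2z_0,\zeta^{2p+1}z_1,\dots,\zeta^{2p+1}z_{2m+1})$. Then the orbifold singular stratum of $\mathcal Z_p$ is the quadric $Q_{2m-1}=\{z_0=0,\ z_1^2+\cdots+z_{2m+1}^2=0\}$ with isotropy group $\mathbb Z_{2p+1}$; hence the order of $\mathcal Z_p$ is $2p+1$.
   Context: The order of an orbifold is the least common multiple of the orders of its local uniformizing groups. *)

theory Defs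
  imports "HOL-Analysis.Analysis"
begin

text \<open>Points of C^(2m+2) are functions nat => complex vanishing beyond index 2m+1
  (coordinates z_0,...,z_(2m+1)).\<close>

definition coords :: "nat \<Rightarrow> (nat \<Rightarrow> complex) set" where
  "coords m = {z. \<forall>i>2*m+1. z i = 0}"

definition sphere_pt :: "nat \<Rightarrow> (nat \<Rightarrow> complex) \<Rightarrow> bool" where
  "sphere_pt m z \<longleftrightarrow> z \<in> coords m \<and> (\<Sum>i\<le>2*m+1. (cmod (z i))\<^sup>2) = 1"

definition link :: "nat \<Rightarrow> nat \<Rightarrow> (nat \<Rightarrow> complex) set" where
  "link m p = {z. sphere_pt m z \<and> (z 0) ^ (2*p+1) + (\<Sum>i=1..2*m+1. (z i)\<^sup>2) = 0}"

definition wact :: "nat \<Rightarrow> complex \<Rightarrow> (nat \<Rightarrow> complex) \<Rightarrow> (nat \<Rightarrow> complex)" where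
  "wact p \<zeta> z = (\<lambda>i. if i = 0 then \<zeta>\<^sup>2 * z 0 else \<zeta> ^ (2*p+1) * z i)"

definition isotropy :: "nat \<Rightarrow> (nat \<Rightarrow> complex) \<Rightarrow> complex set" where
  "isotropy p z = {\<zeta>. cmod \<zeta> = 1 \<and> wact p \<zeta> z = z}"

definition singular_stratum :: "nat \<Rightarrow> nat \<Rightarrow> (nat \<Rightarrow> complex) set" where
  "singular_stratum m p = {z \<in> link m p. isotropy p z \<noteq> {1}}"

definition quadric :: "nat \<Rightarrow> (nat \<Rightarrow> complex) set" where
  "quadric m = {z. sphere_pt m z \<and> z 0 = 0 \<and> (\<Sum>i=1..2*m+1. (z i)\<^sup>2) = 0}"

definition orbifold_order :: "nat \<Rightarrow> nat \<Rightarrow> nat" where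
  "orbifold_order m p = Lcm ((\<lambda>z. card (isotropy p z)) ` link m p)"

end

theory Submission
  imports Defs
begin

lemma sphere_nz:
  assumes "sphere_pt m z" "z 0 = 0"
  shows "\<exists>i\<in>{1..2*m+1}. z i \<noteq> 0"
proof (rule ccontr)
  assume nt: "\<not> ?thesis"
  have "\<forall>i\<le>2*m+1. z i = 0"
  proof (intro allI impI)
    fix i assume "i \<le> 2*m+1"
    show "z i = 0"
    proof (cases "i = 0")
      case True thus ?thesis using assms(2) by simp
    next
      case False thus ?thesis using nt \<open>i \<le> 2*m+1\<close> by auto
    qed
  qed
  hence "(\<Sum>i\<le>2*m+1. (cmod (z i))\<^sup>2) = 0" by simp
  thus False using assms(1) unfolding sphere_pt_def by simp
qed

lemma iso_quadric:
  assumes "z \<in> quadric m"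
  shows "isotropy p z = {\<zeta>. \<zeta> ^ (2*p+1) = 1}"
proof -
  have sp: "sphere_pt m z" and z0: "z 0 = 0" using assms unfolding quadric_def by auto
  obtain i where i: "i \<in> {1..2*m+1}" "z i \<noteq> 0" using sphere_nz[OF sp z0] by blast
  show ?thesis
  proof (intro set_eqI iffI)
    fix \<zeta> :: complex assume "\<zeta> \<in> isotropy p z"
    hence "wact p \<zeta> z i = z i" unfolding isotropy_def by auto
    hence "\<zeta> ^ (2*p+1) * z i = z i" using i unfolding wact_def by auto
    hence "\<zeta> ^ (2*p+1) = 1" using i(2) by simp
    thus "\<zeta> \<in> {\<zeta>. \<zeta> ^ (2*p+1) = 1}" by simp
  next
    fix \<zeta> :: complex assume "\<zeta> \<in> {\<zeta>. \<zeta> ^ (2*p+1) = 1}"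
    hence e: "\<zeta> ^ (2*p+1) = 1" by simp
    hence "cmod (\<zeta> ^ (2*p+1)) = 1" by simp
    hence "cmod \<zeta> ^ (2*p+1) = 1" by (simp only: norm_power)
    hence "cmod \<zeta> ^ (2*p+1) = 1 ^ (2*p+1)" by simp
    hence "cmod \<zeta> = 1" by (rule power_eq_imp_eq_base) auto
    moreover have "wact p \<zeta> z = z" unfolding wact_def using e z0 by auto
    ultimately show "\<zeta> \<in> isotropy p z" unfolding isotropy_def by auto
  qed
qed

lemma iso_other:
  assumes "z \<in> link m p - quadric m"
  shows "isotropy p z = {1}"
proof -
  have sp: "sphere_pt m z" and eq: "(z 0) ^ (2*p+1) + (\<Sum>i=1..2*m+1. (z i)\<^sup>2) = 0"
    and nq: "z \<notin> quadric m" using assms unfolding link_def by auto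
  have z0: "z 0 \<noteq> 0"
  proof
    assume "z 0 = 0"
    hence "(\<Sum>i=1..2*m+1. (z i)\<^sup>2) = 0" using eq by simp
    thus False using nq sp \<open>z 0 = 0\<close> unfolding quadric_def by auto
  qed
  have sne: "(\<Sum>i=1..2*m+1. (z i)\<^sup>2) \<noteq> 0"
  proof
    assume "(\<Sum>i=1..2*m+1. (z i)\<^sup>2) = 0"
    with eq have "z 0 ^ (2*p+1) = 0" by simp
    with z0 show False by simp
  qed
  have "\<exists>i\<in>{1..2*m+1}. z i \<noteq> 0"
  proof (rule ccontr)
    assume "\<not> (\<exists>i\<in>{1..2*m+1}. z i \<noteq> 0)"
    hence "(\<Sum>i=1..2*m+1. (z i)\<^sup>2) = 0" by (intro sum.neutral) simp
    with sne show False by simp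
  qed
  then obtain i where i: "i \<in> {1..2*m+1}" "z i \<noteq> 0" by blast
  show ?thesis
  proof (intro set_eqI iffI)
    fix \<zeta> :: complex assume "\<zeta> \<in> isotropy p z"
    hence w: "wact p \<zeta> z = z" unfolding isotropy_def by auto
    hence "wact p \<zeta> z i = z i" by simp
    hence "\<zeta> ^ (2*p+1) * z i = z i" using i unfolding wact_def by auto
    hence a: "\<zeta> ^ (2*p+1) = 1" using i(2) by simp
    have "wact p \<zeta> z 0 = z 0" using w by simp
    hence "\<zeta>\<^sup>2 * z 0 = z 0" unfolding wact_def by simp
    hence "\<zeta>\<^sup>2 = 1" using z0 by simp
    hence "\<zeta> = 1 \<or> \<zeta> = -1" by (simp add: power2_eq_1_iff)
    moreover have "\<zeta> \<noteq> -1"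
    proof
      assume "\<zeta> = -1"
      hence "\<zeta> ^ (2*p+1) = -1" by simp
      thus False using a by simp
    qed
    ultimately show "\<zeta> \<in> {1}" by simp
  next
    fix \<zeta> :: complex assume "\<zeta> \<in> {1}"
    thus "\<zeta> \<in> isotropy p z" unfolding isotropy_def wact_def by auto
  qed
qed

lemma quadric_sub: "quadric m \<subseteq> link m p"
  unfolding quadric_def link_def by auto

lemma quadric_ne:
  assumes "m \<ge> 1" shows "quadric m \<noteq> {}"
proof -
  define z :: "nat \<Rightarrow> complex" where
    "z = (\<lambda>i. if i = 1 then complex_of_real (1/sqrt 2) else if i = 2 then \<i> * complex_of_real (1/sqrt 2) else 0)"
  have c: "z \<in> coords m" unfolding coords_def z_def using assms by auto
  have s1: "(\<Sum>i\<le>2*m+1. (cmod (z i))\<^sup>2) = (\<Sum>i\<in>{1,2}. (cmod (z i))\<^sup>2)"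
    by (rule sum.mono_neutral_right) (use assms in \<open>auto simp: z_def\<close>)
  moreover have "(cmod (z 1))\<^sup>2 = 1/2" "(cmod (z 2))\<^sup>2 = 1/2"
    by (simp_all add: z_def norm_mult norm_divide power_divide)
  ultimately have sp: "sphere_pt m z" using c s1 unfolding sphere_pt_def by simp
  have s2: "(\<Sum>i=1..2*m+1. (z i)\<^sup>2) = (\<Sum>i\<in>{1,2}. (z i)\<^sup>2)"
    by (rule sum.mono_neutral_right) (use assms in \<open>auto simp: z_def\<close>)
  moreover have "(z 1)\<^sup>2 + (z 2)\<^sup>2 = 0"
    by (simp add: z_def power_divide power_mult_distrib)
  ultimately have "(\<Sum>i=1..2*m+1. (z i)\<^sup>2) = 0" using s2 by simp
  moreover have "z 0 = 0" by (simp add: z_def)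
  ultimately have "z \<in> quadric m" using sp unfolding quadric_def by auto
  thus ?thesis by blast
qed

lemma set1: "S \<subseteq> {a, b} \<Longrightarrow> b \<in> S \<Longrightarrow> a \<notin> S \<Longrightarrow> S = {b}" by blast
lemma set2: "S \<subseteq> {a, b} \<Longrightarrow> b \<in> S \<Longrightarrow> a \<in> S \<Longrightarrow> S = {a, b}" by blast

theorem lemma4p4:
  fixes m p :: nat
  assumes "m \<ge> 1"
  shows "(\<forall>z \<in> quadric m. isotropy p z = {\<zeta>. \<zeta> ^ (2*p+1) = 1})
       \<and> (\<forall>z \<in> link m p - quadric m. isotropy p z = {1})
       \<and> quadric m \<subseteq> link m p
       \<and> (p \<ge> 1 \<longrightarrow> singular_stratum m p = quadric m)
       \<and> orbifold_order m p = 2*p+1"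
proof -
  have cardq: "\<And>z. z \<in> quadric m \<Longrightarrow> card (isotropy p z) = 2*p+1"
  proof -
    fix z assume "z \<in> quadric m"
    hence "isotropy p z = {\<zeta>. \<zeta> ^ (2*p+1) = 1}" by (rule iso_quadric)
    moreover have "card {\<zeta>::complex. \<zeta> ^ (2*p+1) = 1} = 2*p+1"
      by (rule card_roots_unity_eq) simp
    ultimately show "card (isotropy p z) = 2*p+1" by simp
  qed
  have ss: "p \<ge> 1 \<longrightarrow> singular_stratum m p = quadric m"
  proof
    assume p1: "p \<ge> 1"
    show "singular_stratum m p = quadric m"
    proof (intro set_eqI iffI)
      fix z assume "z \<in> singular_stratum m p"
      thus "z \<in> quadric m" unfolding singular_stratum_def using iso_other by blast
    next
      fix z assume zq: "z \<in> quadric m"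
      have "card (isotropy p z) \<noteq> 1" using cardq[OF zq] p1 by simp
      hence "isotropy p z \<noteq> {1}" by auto
      thus "z \<in> singular_stratum m p" unfolding singular_stratum_def using zq quadric_sub by blast
    qed
  qed
  have img: "(\<lambda>z. card (isotropy p z)) ` link m p \<subseteq> {1, 2*p+1}"
  proof
    fix n assume "n \<in> (\<lambda>z. card (isotropy p z)) ` link m p"
    then obtain z where z: "z \<in> link m p" "n = card (isotropy p z)" by blast
    show "n \<in> {1, 2*p+1}"
    proof (cases "z \<in> quadric m")
      case True thus ?thesis using cardq z(2) by simp
    next
      case False
      hence "isotropy p z = {1}" using iso_other z(1) by blast
      thus ?thesis using z(2) by simp
    qed
  qed
  obtain q where q: "q \<in> quadric m" using quadric_ne[OF assms] by blast
  have "card (isotropy p q) \<in> (\<lambda>z. card (isotropy p z)) ` link m p"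
    using q quadric_sub by blast
  hence "2*p+1 \<in> (\<lambda>z. card (isotropy p z)) ` link m p"
    using cardq[OF q] by simp
  hence "(\<lambda>z. card (isotropy p z)) ` link m p = {2*p+1} \<or> (\<lambda>z. card (isotropy p z)) ` link m p = {1, 2*p+1}"
  proof (cases "1 \<in> (\<lambda>z. card (isotropy p z)) ` link m p")
    case True thus ?thesis using set2[OF img \<open>2*p+1 \<in> _\<close>] by blast
  next
    case False thus ?thesis using set1[OF img \<open>2*p+1 \<in> _\<close>] by blast
  qed
  hence "orbifold_order m p = 2*p+1" unfolding orbifold_order_def
    by (elim disjE) simp_all
  moreover have "\<forall>z \<in> quadric m. isotropy p z = {\<zeta>. \<zeta> ^ (2*p+1) = 1}"
    using iso_quadric by blast
  moreover have "\<forall>z \<in> link m p - quadric m. isotropy p z = {1}"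
    using iso_other by blast
  ultimately show ?thesis using quadric_sub ss by blast
qed

end
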